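(* In the model of the context, suppose $\tau+\rho(\gamma,\infty)\tau-\rho(\gamma,\infty)>0$. If the primary protection constraint $\Pr[\mathsf{SIR}_1<\gamma]\le\tau$ holds, then $\beta\ge\beta_{\min}$, where $$\beta_{\min}=\left(\frac{P_1^{2/\alpha}\rho_0(\gamma,\infty)(1-\tau)}{\pi d^2\left(\int_0^\infty\frac{du}{1+u^{\alpha/2}}\right)\lambda_1P_2^{2/\alpha}\left[\tau+\rho(\gamma,\infty)\tau-\rho(\gamma,\infty)\right]}\right)^{\alpha/2}.$$
   Context: Parameters: primary TX density $\lambda_1$, primary and secondary transmit powers $P_1,P_2$, secondary pair distance $d$, path-loss exponent $\alpha>2$, primary decoding threshold $\gamma>0$, tolerated primary outage $\tau\in(0,1)$, secondary decoding threshold $\beta>0$. Define $\rho_0(a,t)=a^{2/\alpha}\int_0^t\frac{du}{1+u^{\alpha/2}}$ and $\rho(a,t)=a^{2/\alpha}\int_{a^{-2/\alpha}}^{t}\frac{du}{1+u^{\alpha/2}}$. In the model, the active secondary TXs have density $\frac{1}{\pi d^2\rho_0(\beta,\infty)}$, and the SIR outage probability of a typical primary user is $$\Pr[\mathsf{SIR}_1<\gamma]=1-\frac{\lambda_1P_2^{2/\alpha}}{\frac{\rho_0(\gamma,\infty)P_1^{2/\alpha}}{\pi d^2\rho_0(\beta,\infty)}+\lambda_1P_2^{2/\alpha}\left(\rho(\gamma,\infty)+1\right)}.$$ *)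

theory Defs
  imports "HOL-Analysis.Analysis"
begin

definition rho0_inf :: "real \<Rightarrow> real \<Rightarrow> real" where
  "rho0_inf alpha a = a powr (2/alpha) * integral {0..} (\<lambda>u. 1 / (1 + u powr (alpha/2)))"

definition rho_inf :: "real \<Rightarrow> real \<Rightarrow> real" where
  "rho_inf alpha a = a powr (2/alpha) *
     integral {a powr (-2/alpha)..} (\<lambda>u. 1 / (1 + u powr (alpha/2)))"

definition primary_outage ::
  "real \<Rightarrow> real \<Rightarrow> real \<Rightarrow> real \<Rightarrow> real \<Rightarrow> real \<Rightarrow> real \<Rightarrow> real" where
  "primary_outage lambda1 P1 P2 d alpha gamma beta =
     1 - (lambda1 * P2 powr (2/alpha)) /
         (rho0_inf alpha gamma * P1 powr (2/alpha) / (pi * d^2 * rho0_inf alpha beta)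
          + lambda1 * P2 powr (2/alpha) * (rho_inf alpha gamma + 1))"

end

theory Submission
  imports Defs
begin

lemma int_nonneg_aux:
  assumes "\<And>u. u \<in> S \<Longrightarrow> 0 \<le> f u"
  shows "0 \<le> integral S (f::real\<Rightarrow>real)"
proof (cases "f integrable_on S")
  case True thus ?thesis using assms by (simp add: integral_nonneg)
next
  case False thus ?thesis by (simp add: not_integrable_integral)
qed

theorem lemma2:
  fixes lambda1 P1 P2 d alpha gamma tau beta :: real
  assumes "lambda1 > 0" and "P1 > 0" and "P2 > 0" and "d > 0" and "alpha > 2"
    and "gamma > 0" and "0 < tau" and "tau < 1" and "beta > 0"
    and "tau + rho_inf alpha gamma * tau - rho_inf alpha gamma > 0"
    and "primary_outage lambda1 P1 P2 d alpha gamma beta \<le> tau"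
  shows "beta \<ge>
    ((P1 powr (2/alpha) * rho0_inf alpha gamma * (1 - tau)) /
     (pi * d^2 * integral {0..} (\<lambda>u. 1 / (1 + u powr (alpha/2))) * lambda1 * P2 powr (2/alpha)
      * (tau + rho_inf alpha gamma * tau - rho_inf alpha gamma))) powr (alpha/2)"
proof -
  define I where "I = integral {0..} (\<lambda>u. 1 / (1 + u powr (alpha/2)))"
  define J where "J = integral {gamma powr (-2/alpha)..} (\<lambda>u. 1 / (1 + u powr (alpha/2)))"
  define g where "g = gamma powr (2/alpha)"
  define b where "b = beta powr (2/alpha)"
  define A where "A = P1 powr (2/alpha)"
  define B where "B = lambda1 * P2 powr (2/alpha)"
  define R where "R = rho_inf alpha gamma"
  define D where "D = tau + R * tau - R"
  define K where "K = pi * d^2"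
  have pos: "\<And>u::real. 0 \<le> 1 / (1 + u powr (alpha/2))"
    by (simp add: add_nonneg_nonneg)
  have I0: "I \<ge> 0" unfolding I_def by (rule int_nonneg_aux) (use pos in auto)
  have J0: "J \<ge> 0" unfolding J_def by (rule int_nonneg_aux) (use pos in auto)
  have g0: "g > 0" using assms by (simp add: g_def)
  have b0: "b > 0" using assms by (simp add: b_def)
  have A0: "A > 0" using assms by (simp add: A_def)
  have B0: "B > 0" using assms by (simp add: B_def)
  have K0: "K > 0" using assms by (simp add: K_def)
  have "rho_inf alpha gamma = g * J" unfolding rho_inf_def g_def J_def by simp
  hence R0: "R \<ge> 0" unfolding R_def using J0 g0 by simp
  have D0: "D > 0" using assms by (simp add: D_def R_def)
  have beta_eq: "b powr (alpha/2) = beta" unfolding b_def using assms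
    by (simp add: powr_powr)
  show ?thesis
  proof (cases "I = 0")
    case True
    then show ?thesis using assms by (simp add: rho0_inf_def I_def[symmetric])
  next
    case False
    with I0 have Ip: "I > 0" by simp
    define X where "X = g * A / (K * b)"
    have X0: "X > 0" using g0 A0 K0 b0 by (simp add: X_def)
    have out: "primary_outage lambda1 P1 P2 d alpha gamma beta = 1 - B / (X + B * (R + 1))"
      unfolding primary_outage_def rho0_inf_def X_def
      using Ip by (simp add: I_def[symmetric] g_def[symmetric] b_def[symmetric] A_def[symmetric]
          B_def[symmetric] R_def[symmetric] K_def[symmetric] mult_ac)
    have den: "X + B * (R + 1) > 0" using X0 B0 R0 by (simp add: add_pos_nonneg)
    have "1 - B / (X + B * (R + 1)) \<le> tau" using assms(11) out by simp
    hence "(1 - tau) * (X + B * (R + 1)) \<le> B" using den by (simp add: field_simps)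
    hence "(1 - tau) * X \<le> B * D" unfolding D_def by (simp add: algebra_simps)
    hence "(1 - tau) * g * A / (K * b) \<le> B * D" by (simp add: X_def mult_ac)
    hence key: "(1 - tau) * g * A / (K * B * D) \<le> b"
      using b0 K0 B0 D0 by (simp add: field_simps)
    have eq: "(P1 powr (2/alpha) * rho0_inf alpha gamma * (1 - tau)) /
     (pi * d^2 * integral {0..} (\<lambda>u. 1 / (1 + u powr (alpha/2))) * lambda1 * P2 powr (2/alpha)
      * (tau + rho_inf alpha gamma * tau - rho_inf alpha gamma)) = (1 - tau) * g * A / (K * B * D)"
      unfolding rho0_inf_def using Ip B0 D0 K0
      by (simp add: I_def[symmetric] g_def[symmetric] A_def[symmetric] B_def[symmetric]
          R_def[symmetric] K_def[symmetric] D_def[symmetric] field_simps)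
    have nn: "0 \<le> (1 - tau) * g * A / (K * B * D)"
      using assms g0 A0 K0 B0 D0 by simp
    have "((1 - tau) * g * A / (K * B * D)) powr (alpha/2) \<le> b powr (alpha/2)"
      using key nn assms by (intro powr_mono2) auto
    thus ?thesis using eq beta_eq by simp
  qed
qed

end
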